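(* Let $n\ge1$, let $\mu,\nu\in\mathbb{R}^n$ be probability vectors, let $\gamma>0$, let $\phi$ satisfy the Bregman assumption in the context with $\phi'_0=-\infty$, let $\mathcal{C}\subseteq\mathbb{R}^{n\times n}$ be a nonempty closed convex set, and let $\hat X\in\mathcal{T}_\phi(\mu,\nu)$. Consider the bilevel problem $$(\mathrm{P}_1)\qquad \inf_{C\in\mathcal{C}} B_\phi(\hat X\,\|\,\mathcal{F}(C))$$ and the single-level problem $$(\mathrm{P}_2)\qquad \inf_{C\in\mathcal{C},\,u,v\in\mathbb{R}^n} E(u,v,C):=\psi\Big(\frac{u\oplus v-C}{\gamma}\Big)-\Big\langle\frac{u\oplus v-C}{\gamma},\hat X\Big\rangle.$$ Then $(\mathrm{P}_1)$ has an optimal solution if and only if $(\mathrm{P}_2)$ has one. Moreover, when both have optimal solutions, $C^*$ solves $(\mathrm{P}_1)$ if and only if $(u^{C^*},v^{C^*},C^* )$ solves $(\mathrm{P}_2)$, where $(u^{C^*},v^{C^*})$ is an optimal dual pair for the forward problem with cost $C^*$, i.e. $u^{C^*},v^{C^*}\in\mathbb{R}^n$ satisfy $\mathcal{F}(C^* )=\psi'\big((u^{C^*}\oplus v^{C^*}-C^* )/\gamma\big)$ entrywise.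
   Context: Probability vectors have nonnegative entries summing to $1$. $\mathcal{U}(\mu,\nu):=\{X\in\mathbb{R}_+^{n\times n}: X\mathbf{1}=\mu,\ X^\top\mathbf{1}=\nu\}$. Bregman assumption on $\phi:\mathbb{R}\to(-\infty,+\infty]$: $I=\operatorname{dom}\phi$ is an interval with $(0,1)\subseteq\operatorname{int}(I)$; $\phi$ is of Legendre type (proper, closed, strictly convex on $\operatorname{int}(\operatorname{dom}\phi)$, essentially smooth); $\phi$ is $C^1$ on $\operatorname{int}(I)$. $\phi(X):=\sum_{i,j}\phi(X_{ij})$. $\mathcal{F}(C):=\arg\min_{X\in\mathcal{U}(\mu,\nu)}\{\langle C,X\rangle+\gamma\phi(X)\}$. $\phi'_0:=\lim_{x\to0^+}\phi'(x)$, $\phi'_1:=\lim_{x\to1^-}\phi'(x)$. With $\phi'_0=-\infty$: $\mathcal{T}_\phi(\mu,\nu):=\mathcal{U}(\mu,\nu)\cap(0,1]^{n\times n}$ if $\phi'_1$ is finite and $\mathcal{U}(\mu,\nu)\cap(0,1)^{n\times n}$ if $\phi'_1=+\infty$. $\psi:=\phi^*$ is the Fenchel conjugate of $\phi$; for a matrix $Z$, $\psi(Z):=\sum_{i,j}\psi(Z_{ij})$ and $\psi'(Z)$ is entrywise. The Bregman divergence is $B_\phi(x\|y):=\phi(x)-\phi(y)-(x-y)\phi'(y)$, extended to matrices by summing over entries. $(u\oplus v)_{ij}:=u_i+v_j$. *)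

theory Defs
  imports "HOL-Analysis.Analysis"
begin

text \<open>Index type 'n (finite, nonempty): vectors real^'n, matrices real^'n^'n.
  The extended-valued function phi : R -> (-inf,+inf] is modelled as real => ereal.\<close>

definition prob_vec :: "real^'n \<Rightarrow> bool" where
  "prob_vec p \<longleftrightarrow> (\<forall>i. p$i \<ge> 0) \<and> (\<Sum>i\<in>UNIV. p$i) = 1"

definition transport_polytope :: "real^'n \<Rightarrow> real^'n \<Rightarrow> (real^'n^'n) set" where
  "transport_polytope \<mu> \<nu> = {X. (\<forall>i j. X$i$j \<ge> 0) \<and> (\<forall>i. (\<Sum>j\<in>UNIV. X$i$j) = \<mu>$i)
                                 \<and> (\<forall>j. (\<Sum>i\<in>UNIV. X$i$j) = \<nu>$j)}"

definition strictly_convex_on :: "real set \<Rightarrow> (real \<Rightarrow> real) \<Rightarrow> bool" where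
  "strictly_convex_on S f \<longleftrightarrow> (\<forall>x\<in>S. \<forall>y\<in>S. \<forall>t. x \<noteq> y \<and> 0 < t \<and> t < 1 \<longrightarrow>
      f ((1 - t) * x + t * y) < (1 - t) * f x + t * f y)"

definition edom :: "(real \<Rightarrow> ereal) \<Rightarrow> real set" where
  "edom f = {x. f x \<noteq> \<infinity>}"

text \<open>Bregman assumption: dom phi an interval with (0,1) in its interior; phi of Legendre
  type (proper, closed, convex, strictly convex on int dom, essentially smooth); phi C^1 on
  int dom with derivative dphi.\<close>
definition bregman_assumption :: "(real \<Rightarrow> ereal) \<Rightarrow> (real \<Rightarrow> real) \<Rightarrow> bool" where
  "bregman_assumption phi dphi \<longleftrightarrow>
     is_interval (edom phi) \<and> {0<..<1} \<subseteq> interior (edom phi) \<and>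
     (\<forall>x. phi x \<noteq> -\<infinity>) \<and>
     (\<forall>c. closed {x. phi x \<le> ereal c}) \<and>
     convex_on (edom phi) (\<lambda>x. real_of_ereal (phi x)) \<and>
     strictly_convex_on (interior (edom phi)) (\<lambda>x. real_of_ereal (phi x)) \<and>
     (\<forall>x\<in>interior (edom phi). ((\<lambda>y. real_of_ereal (phi y)) has_real_derivative dphi x) (at x)) \<and>
     continuous_on (interior (edom phi)) dphi \<and>
     (\<forall>b\<in>frontier (interior (edom phi)).
        filterlim (\<lambda>x. \<bar>dphi x\<bar>) at_top (at b within interior (edom phi)))"

definition dphi0_neg_inf :: "(real \<Rightarrow> real) \<Rightarrow> bool" where
  "dphi0_neg_inf dphi \<longleftrightarrow> filterlim dphi at_bot (at_right 0)"

definition dphi1_finite :: "(real \<Rightarrow> real) \<Rightarrow> bool" where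
  "dphi1_finite dphi \<longleftrightarrow> (\<exists>L. (dphi \<longlongrightarrow> L) (at_left 1))"

definition T_phi :: "(real \<Rightarrow> real) \<Rightarrow> real^'n \<Rightarrow> real^'n \<Rightarrow> (real^'n^'n) set" where
  "T_phi dphi \<mu> \<nu> = transport_polytope \<mu> \<nu> \<inter>
     {X. \<forall>i j. 0 < X$i$j \<and> (if dphi1_finite dphi then X$i$j \<le> 1 else X$i$j < 1)}"

definition mat_sum :: "(real \<Rightarrow> ereal) \<Rightarrow> real^'n^'n \<Rightarrow> ereal" where
  "mat_sum f X = (\<Sum>i\<in>UNIV. \<Sum>j\<in>UNIV. f (X$i$j))"

definition forward :: "(real \<Rightarrow> ereal) \<Rightarrow> real \<Rightarrow> real^'n \<Rightarrow> real^'n \<Rightarrow> real^'n^'n \<Rightarrow> real^'n^'n" where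
  "forward phi \<gamma> \<mu> \<nu> C = (THE X. X \<in> transport_polytope \<mu> \<nu> \<and>
      (\<forall>Y\<in>transport_polytope \<mu> \<nu>. ereal (inner C X) + ereal \<gamma> * mat_sum phi X
                                  \<le> ereal (inner C Y) + ereal \<gamma> * mat_sum phi Y))"

definition fconj :: "(real \<Rightarrow> ereal) \<Rightarrow> real \<Rightarrow> ereal" where
  "fconj phi y = (SUP x. ereal (x * y) - phi x)"

definition bregman_div :: "(real \<Rightarrow> ereal) \<Rightarrow> (real \<Rightarrow> real) \<Rightarrow> real \<Rightarrow> real \<Rightarrow> ereal" where
  "bregman_div phi dphi x y = phi x - phi y - ereal ((x - y) * dphi y)"

definition bregman_div_mat :: "(real \<Rightarrow> ereal) \<Rightarrow> (real \<Rightarrow> real) \<Rightarrow> real^'n^'n \<Rightarrow> real^'n^'n \<Rightarrow> ereal" where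
  "bregman_div_mat phi dphi X Y = (\<Sum>i\<in>UNIV. \<Sum>j\<in>UNIV. bregman_div phi dphi (X$i$j) (Y$i$j))"

definition oplus :: "real^'n \<Rightarrow> real^'n \<Rightarrow> real^'n^'n" where
  "oplus u v = (\<chi> i j. u$i + v$j)"

definition E_obj :: "(real \<Rightarrow> ereal) \<Rightarrow> real \<Rightarrow> real^'n^'n \<Rightarrow> real^'n \<Rightarrow> real^'n \<Rightarrow> real^'n^'n \<Rightarrow> ereal" where
  "E_obj phi \<gamma> Xh u v C =
     mat_sum (fconj phi) ((1 / \<gamma>) *\<^sub>R (oplus u v - C)) - ereal (inner ((1 / \<gamma>) *\<^sub>R (oplus u v - C)) Xh)"

definition solves_P1 :: "(real \<Rightarrow> ereal) \<Rightarrow> (real \<Rightarrow> real) \<Rightarrow> real \<Rightarrow> real^'n \<Rightarrow> real^'n \<Rightarrow>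
    (real^'n^'n) set \<Rightarrow> real^'n^'n \<Rightarrow> real^'n^'n \<Rightarrow> bool" where
  "solves_P1 phi dphi \<gamma> \<mu> \<nu> \<C> Xh C \<longleftrightarrow> C \<in> \<C> \<and>
     (\<forall>C'\<in>\<C>. bregman_div_mat phi dphi Xh (forward phi \<gamma> \<mu> \<nu> C)
               \<le> bregman_div_mat phi dphi Xh (forward phi \<gamma> \<mu> \<nu> C'))"

definition solves_P2 :: "(real \<Rightarrow> ereal) \<Rightarrow> real \<Rightarrow> (real^'n^'n) set \<Rightarrow> real^'n^'n \<Rightarrow>
    real^'n \<Rightarrow> real^'n \<Rightarrow> real^'n^'n \<Rightarrow> bool" where
  "solves_P2 phi \<gamma> \<C> Xh u v C \<longleftrightarrow> C \<in> \<C> \<and>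
     (\<forall>C'\<in>\<C>. \<forall>u' v'. E_obj phi \<gamma> Xh u v C \<le> E_obj phi \<gamma> Xh u' v' C')"

definition dual_pair :: "(real \<Rightarrow> ereal) \<Rightarrow> real \<Rightarrow> real^'n \<Rightarrow> real^'n \<Rightarrow> real^'n^'n \<Rightarrow>
    real^'n \<Rightarrow> real^'n \<Rightarrow> bool" where
  "dual_pair phi \<gamma> \<mu> \<nu> C u v \<longleftrightarrow>
     (\<forall>i j. let z = (u$i + v$j - C$i$j) / \<gamma> in
        z \<in> interior (edom (fconj phi)) \<and>
        ((\<lambda>y. real_of_ereal (fconj phi y)) has_real_derivative (forward phi \<gamma> \<mu> \<nu> C)$i$j) (at z))"

end

theory Submission
  imports Defs
begin


locale P6 =
  fixes \<mu> \<nu> :: "real^'n" and \<gamma> :: real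
    and phi :: "real \<Rightarrow> ereal" and dphi :: "real \<Rightarrow> real"
    and Xh :: "real^'n^'n"
  assumes mu: "prob_vec \<mu>" and nu: "prob_vec \<nu>" and gam: "\<gamma> > 0"
    and breg: "bregman_assumption phi dphi" and d0: "dphi0_neg_inf dphi"
    and Xh: "Xh \<in> T_phi dphi \<mu> \<nu>"
begin

definition "pr x = real_of_ereal (phi x)"
abbreviation "I0 \<equiv> interior (edom phi)"
abbreviation "U \<equiv> transport_polytope \<mu> \<nu>"

lemma ninf: "phi x \<noteq> -\<infinity>" using breg unfolding bregman_assumption_def by auto
lemma sub01: "{0<..<1} \<subseteq> I0" using breg unfolding bregman_assumption_def by auto
lemma convx: "convex_on (edom phi) pr" using breg unfolding bregman_assumption_def pr_def by auto
lemma sconv: "strictly_convex_on I0 pr" using breg unfolding bregman_assumption_def pr_def by auto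
lemma derv: "x \<in> I0 \<Longrightarrow> (pr has_real_derivative dphi x) (at x)"
  using breg unfolding bregman_assumption_def pr_def by auto
lemma contd: "continuous_on I0 dphi" using breg unfolding bregman_assumption_def by auto
lemma ess: "b \<in> frontier I0 \<Longrightarrow> filterlim (\<lambda>x. \<bar>dphi x\<bar>) at_top (at b within I0)"
  using breg unfolding bregman_assumption_def by auto
lemma cvxdom: "convex (edom phi)"
  using breg is_interval_convex unfolding bregman_assumption_def by auto
lemma cvxI0: "convex I0" using cvxdom convex_interior by auto
lemma openI0: "open I0" by auto
lemma I0dom: "x \<in> I0 \<Longrightarrow> x \<in> edom phi" using interior_subset by auto
lemma phi_eq: "x \<in> edom phi \<Longrightarrow> phi x = ereal (pr x)"
  using ninf[of x] unfolding edom_def pr_def by (cases "phi x") auto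
lemma phi_notdom: "x \<notin> edom phi \<Longrightarrow> phi x = \<infinity>"
  unfolding edom_def by auto

lemma tangent:
  assumes "x \<in> I0" "y \<in> edom phi"
  shows "pr y \<ge> pr x + dphi x * (y - x)"
proof -
  have "pr y - pr x \<ge> dphi x * (y - x)"
    apply (rule convex_on_imp_above_tangent[OF convx _ assms(1) assms(2)])
    using cvxdom convex_connected apply blast
    using derv[OF assms(1)] has_field_derivative_at_within by blast
  thus ?thesis by simp
qed

lemma dmono: assumes "x \<in> I0" "y \<in> I0" "x \<le> y" shows "dphi x \<le> dphi y"
proof -
  have "pr y \<ge> pr x + dphi x * (y - x)" using tangent assms I0dom by auto
  moreover have "pr x \<ge> pr y + dphi y * (x - y)" using tangent assms I0dom by auto
  ultimately have "(dphi y - dphi x) * (y - x) \<ge> 0" by (simp add: algebra_simps)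
  thus ?thesis using assms(3)
    by (cases "x = y") (auto simp: zero_le_mult_iff)
qed

lemma dsmono: assumes "x \<in> I0" "y \<in> I0" "x < y" shows "dphi x < dphi y"
proof (rule ccontr)
  assume "\<not> ?thesis"
  then have eq: "dphi x = dphi y" using dmono[OF assms(1,2)] assms(3) by auto
  have t1: "pr y \<ge> pr x + dphi x * (y - x)" using tangent assms I0dom by auto
  have t2: "pr x \<ge> pr y + dphi y * (x - y)" using tangent assms I0dom by auto
  define c where "c = (x + y) / 2"
  have "(1/2) *\<^sub>R x + (1/2) *\<^sub>R y \<in> I0"
    using cvxI0 assms(1,2) by (intro convexD) auto
  then have cI: "c \<in> I0" unfolding c_def by (simp add: field_simps)
  have t3: "pr c \<ge> pr x + dphi x * (c - x)" using tangent[OF assms(1) I0dom[OF cI]] .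
  have "pr ((1 - 1/2) * x + (1/2) * y) < (1 - 1/2) * pr x + (1/2) * pr y"
  proof -
    have "x \<noteq> y" using assms(3) by simp
    then show ?thesis using sconv assms(1,2) unfolding strictly_convex_on_def
      by (smt (verit) field_sum_of_halves)
  qed
  moreover have "(1 - 1/2) * x + (1/2) * y = c" unfolding c_def by simp
  ultimately have lt: "pr c < pr x / 2 + pr y / 2" by simp
  have "pr y = pr x + dphi x * (y - x)" using t1 t2 eq by (simp add: algebra_simps)
  moreover have "dphi x * (c - x) = dphi x * (y - x) / 2" unfolding c_def by (simp add: field_simps)
  ultimately show False using t3 lt by simp
qed

lemma pr_cont: "continuous_on I0 pr"
  using derv by (meson DERIV_isCont continuous_at_imp_continuous_on)

lemma Xh_U: "Xh \<in> U" and Xh_pos: "0 < Xh$i$j"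
  using Xh unfolding T_phi_def by auto

lemma U_nonneg: "X \<in> U \<Longrightarrow> 0 \<le> X$i$j" unfolding transport_polytope_def by auto
lemma U_row: "X \<in> U \<Longrightarrow> (\<Sum>j\<in>UNIV. X$i$j) = \<mu>$i" unfolding transport_polytope_def by auto
lemma U_col: "X \<in> U \<Longrightarrow> (\<Sum>i\<in>UNIV. X$i$j) = \<nu>$j" unfolding transport_polytope_def by auto
lemma U_le_mu: assumes "X \<in> U" shows "X$i$j \<le> \<mu>$i"
proof -
  have "X$i$j \<le> (\<Sum>j\<in>UNIV. X$i$j)"
    by (rule member_le_sum) (auto simp: U_nonneg[OF assms])
  thus ?thesis using U_row[OF assms] by simp
qed
lemma mu_nonneg: "0 \<le> \<mu>$i" using mu unfolding prob_vec_def by auto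
lemma mu_sum: "(\<Sum>i\<in>UNIV. \<mu>$i) = 1" using mu unfolding prob_vec_def by auto
lemma mu_le1: "\<mu>$i \<le> 1"
proof -
  have "\<mu>$i \<le> (\<Sum>i\<in>UNIV. \<mu>$i)" by (rule member_le_sum) (auto simp: mu_nonneg)
  thus ?thesis using mu_sum by simp
qed
lemma mu_pos: "0 < \<mu>$i"
proof -
  have "0 < Xh$i$i" by (rule Xh_pos)
  also have "Xh$i$i \<le> \<mu>$i" by (rule U_le_mu[OF Xh_U])
  finally show ?thesis .
qed

definition "m = Max (range (\<lambda>i. \<mu>$i))"
lemma mu_le_m: "\<mu>$i \<le> m" unfolding m_def by (rule Max_ge) auto
lemma m_le1: "m \<le> 1"
proof -
  have "m \<in> range (\<lambda>i. \<mu>$i)" unfolding m_def by (rule Max_in) auto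
  thus ?thesis using mu_le1 by auto
qed
lemma m_pos: "0 < m" using mu_pos[of undefined] mu_le_m[of undefined] by simp
lemma U_le_m: "X \<in> U \<Longrightarrow> X$i$j \<le> m" using U_le_mu mu_le_m order_trans by blast
lemma U_le1: "X \<in> U \<Longrightarrow> X$i$j \<le> 1" using U_le_m m_le1 order_trans by blast

lemma one_in_I0:
  assumes "dphi1_finite dphi" shows "1 \<in> I0"
proof (rule ccontr)
  assume n1: "1 \<notin> I0"
  have "1 \<in> closure {0<..<(1::real)}" by simp
  also have "closure {0<..<(1::real)} \<subseteq> closure I0" using sub01 closure_mono by blast
  finally have "1 \<in> frontier I0" using n1 unfolding frontier_def by simp
  then have lim: "filterlim (\<lambda>x. \<bar>dphi x\<bar>) at_top (at 1 within I0)" by (rule ess)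
  define F where "F = at (1::real) within {0<..<1}"
  have "F \<le> at 1 within I0" unfolding F_def using sub01 by (rule at_le)
  with lim have l1: "filterlim (\<lambda>x. \<bar>dphi x\<bar>) at_top F" using filterlim_mono by blast
  obtain L where "(dphi \<longlongrightarrow> L) (at_left 1)" using assms unfolding dphi1_finite_def by auto
  moreover have "F \<le> at_left 1" unfolding F_def by (rule at_le) auto
  ultimately have "(dphi \<longlongrightarrow> L) F" using tendsto_mono by blast
  then have l2: "((\<lambda>x. \<bar>dphi x\<bar>) \<longlongrightarrow> \<bar>L\<bar>) F" by (rule tendsto_rabs)
  have nb: "F \<noteq> bot" unfolding F_def by (subst at_within_eq_bot_iff) auto
  show False
    using not_tendsto_and_filterlim_at_infinity[OF nb l2 filterlim_at_top_imp_at_infinity[OF l1]] .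
qed

lemma m_I0: "m \<in> I0"
proof (cases "m < 1")
  case True then show ?thesis using sub01 m_pos by auto
next
  case False
  then have m1: "m = 1" using m_le1 by simp
  have "m \<in> range (\<lambda>i. \<mu>$i)" unfolding m_def by (rule Max_in) auto
  then obtain i where mi: "\<mu>$i = 1" using m1 by auto
  have "(\<Sum>k\<in>UNIV. \<mu>$k) = \<mu>$i + (\<Sum>k\<in>UNIV-{i}. \<mu>$k)"
    by (simp add: sum.remove)
  then have "(\<Sum>k\<in>UNIV-{i}. \<mu>$k) = 0" using mi mu_sum by simp
  then have "\<forall>k\<in>UNIV-{i}. \<mu>$k = 0" by (subst (asm) sum_nonneg_eq_0_iff) (auto simp: mu_nonneg)
  then have univ: "UNIV = {i}" using mu_pos by (metis DiffI UNIV_I less_irrefl singletonI subsetI subset_antisym)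
  have "(\<Sum>j\<in>UNIV. Xh$i$j) = Xh$i$i" by (simp add: univ)
  then have "Xh$i$i = 1" using U_row[OF Xh_U, of i] mi by simp
  then have "dphi1_finite dphi" using Xh unfolding T_phi_def by (auto split: if_splits) (metis less_irrefl)
  then show ?thesis using one_in_I0 m1 by simp
qed

lemma I0_0m: "x \<in> {0<..m} \<Longrightarrow> x \<in> I0"
proof (cases "x < 1")
  case False
  assume "x \<in> {0<..m}"
  then have "x = m" using False m_le1 by auto
  then show ?thesis using m_I0 by simp
qed (use sub01 in auto)

lemma fin_min:
  fixes f :: "'a::finite \<Rightarrow> 'b::finite \<Rightarrow> real"
  assumes "\<And>i j. 0 < f i j" shows "\<exists>e>0. \<forall>i j. e \<le> f i j"
proof -
  let ?S = "range (\<lambda>q. f (fst q) (snd q))"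
  have "Min ?S \<in> ?S" by (rule Min_in) auto
  then have "0 < Min ?S" using assms by auto
  moreover have "\<forall>i j. Min ?S \<le> f i j" proof (intro allI)
    fix i j
    have "f i j \<in> ?S" by (rule range_eqI[of _ _ "(i,j)"]) simp
    then show "Min ?S \<le> f i j" by (intro Min_le) auto
  qed
  ultimately show ?thesis by blast
qed

end



lemma cont_entry: "continuous_on S (\<lambda>X::real^'n^'m. X$i$j)"
  by (rule continuous_at_imp_continuous_on) (auto intro!: isCont_vec_nth)

lemma dsum: "(\<Sum>k\<in>UNIV. \<Sum>l\<in>UNIV. f k l) = (\<Sum>q\<in>(UNIV::('a::finite \<times> 'b::finite) set). f (fst q) (snd q))"
proof -
  have "(\<Sum>k\<in>UNIV. \<Sum>l\<in>UNIV. f k l) = (\<Sum>(k,l)\<in>(UNIV::'a set) \<times> (UNIV::'b set). f k l)"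
    by (rule sum.cartesian_product)
  also have "\<dots> = (\<Sum>q\<in>(UNIV::('a \<times> 'b) set). f (fst q) (snd q))"
    by (simp add: case_prod_beta)
  finally show ?thesis .
qed

lemma absbound: fixes x y :: real assumes "\<bar>y\<bar> \<le> 1" shows "x * y \<le> \<bar>x\<bar>"
proof -
  have "x * y \<le> \<bar>x\<bar> * \<bar>y\<bar>" by (metis abs_ge_self abs_mult)
  also have "\<dots> \<le> \<bar>x\<bar>" using assms by (simp add: mult_left_le)
  finally show ?thesis .
qed

context P6 begin

definition Gr :: "real^'n^'n \<Rightarrow> real^'n^'n \<Rightarrow> real" where "Gr C X = (\<Sum>i\<in>UNIV. \<Sum>j\<in>UNIV. C$i$j * X$i$j + \<gamma> * pr (X$i$j))"
definition Gobj :: "real^'n^'n \<Rightarrow> real^'n^'n \<Rightarrow> ereal" where "Gobj C X = ereal (inner C X) + ereal \<gamma> * mat_sum phi X"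
definition alldom :: "real^'n^'n \<Rightarrow> bool" where "alldom X \<longleftrightarrow> (\<forall>i j. X$i$j \<in> edom phi)"

lemma inner_mat: "inner (C::real^'n^'n) X = (\<Sum>i\<in>UNIV. \<Sum>j\<in>UNIV. C$i$j * X$i$j)"
  by (simp only: inner_vec_def inner_real_def)

lemma Gr_alt: "Gr C X = inner C X + \<gamma> * (\<Sum>i\<in>UNIV. \<Sum>j\<in>UNIV. pr (X$i$j))"
  unfolding Gr_def inner_mat by (simp add: sum.distrib sum_distrib_left)

lemma G_eq: "alldom X \<Longrightarrow> Gobj C X = ereal (Gr C X)"
  unfolding Gobj_def mat_sum_def alldom_def Gr_alt by (simp add: phi_eq)

lemma G_inf: assumes "\<not> alldom X" shows "Gobj C X = \<infinity>"
proof -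
  obtain i j where "X$i$j \<notin> edom phi" using assms unfolding alldom_def by auto
  then have "phi (X$i$j) = \<infinity>" by (rule phi_notdom)
  then have "(\<Sum>j\<in>UNIV. phi (X$i$j)) = \<infinity>" by (subst sum_Pinfty) auto
  then have "mat_sum phi X = \<infinity>" unfolding mat_sum_def by (subst sum_Pinfty) auto
  then show ?thesis unfolding Gobj_def using gam by simp
qed

lemma U_convex: assumes "X \<in> U" "Y \<in> U" "0 \<le> t" "t \<le> 1"
  shows "(1 - t) *\<^sub>R X + t *\<^sub>R Y \<in> U"
proof -
  let ?Z = "(1 - t) *\<^sub>R X + t *\<^sub>R Y"
  have e: "?Z$i$j = (1 - t) * X$i$j + t * Y$i$j" for i j by simp
  have "0 \<le> ?Z$i$j" for i j
    unfolding e using assms U_nonneg[OF assms(1)] U_nonneg[OF assms(2)] by simp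
  moreover have "(\<Sum>j\<in>UNIV. ?Z$i$j) = \<mu>$i" for i
  proof -
    have "(\<Sum>j\<in>UNIV. ?Z$i$j) = (1 - t) * (\<Sum>j\<in>UNIV. X$i$j) + t * (\<Sum>j\<in>UNIV. Y$i$j)"
      unfolding e by (simp add: sum.distrib sum_distrib_left)
    also have "\<dots> = \<mu>$i" using U_row[OF assms(1)] U_row[OF assms(2)] by (simp add: algebra_simps)
    finally show ?thesis .
  qed
  moreover have "(\<Sum>i\<in>UNIV. ?Z$i$j) = \<nu>$j" for j
  proof -
    have "(\<Sum>i\<in>UNIV. ?Z$i$j) = (1 - t) * (\<Sum>i\<in>UNIV. X$i$j) + t * (\<Sum>i\<in>UNIV. Y$i$j)"
      unfolding e by (simp add: sum.distrib sum_distrib_left)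
    also have "\<dots> = \<nu>$j" using U_col[OF assms(1)] U_col[OF assms(2)] by (simp add: algebra_simps)
    finally show ?thesis .
  qed
  ultimately show ?thesis unfolding transport_polytope_def by blast
qed

lemma Gr_convex: assumes "alldom X" "alldom Y" "0 \<le> t" "t \<le> 1"
  shows "Gr C ((1 - t) *\<^sub>R X + t *\<^sub>R Y) \<le> (1 - t) * Gr C X + t * Gr C Y"
proof -
  have "pr ((1 - t) * X$i$j + t * Y$i$j) \<le> (1 - t) * pr (X$i$j) + t * pr (Y$i$j)" for i j
    using convex_onD[OF convx, of t "X$i$j" "Y$i$j"] assms unfolding alldom_def by auto
  then have "C$i$j * ((1 - t) * X$i$j + t * Y$i$j) + \<gamma> * pr ((1 - t) * X$i$j + t * Y$i$j)
      \<le> (1 - t) * (C$i$j * X$i$j + \<gamma> * pr (X$i$j)) + t * (C$i$j * Y$i$j + \<gamma> * pr (Y$i$j))" for i j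
  proof -
    have "\<gamma> * pr ((1 - t) * X$i$j + t * Y$i$j) \<le> \<gamma> * ((1 - t) * pr (X$i$j) + t * pr (Y$i$j))"
      using \<open>\<And>i j. pr ((1 - t) * X$i$j + t * Y$i$j) \<le> _\<close> gam by (intro mult_left_mono) auto
    then show ?thesis by (simp add: algebra_simps)
  qed
  then have "Gr C ((1 - t) *\<^sub>R X + t *\<^sub>R Y) \<le> (\<Sum>i\<in>UNIV. \<Sum>j\<in>UNIV.
      (1 - t) * (C$i$j * X$i$j + \<gamma> * pr (X$i$j)) + t * (C$i$j * Y$i$j + \<gamma> * pr (Y$i$j)))"
    unfolding Gr_def by (auto intro!: sum_mono)
  also have "\<dots> = (1 - t) * Gr C X + t * Gr C Y"
    by (simp add: Gr_def sum.distrib flip: sum_distrib_left)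
  finally show ?thesis .
qed

lemma pr_deriv_dir: "x \<in> I0 \<Longrightarrow> ((\<lambda>s. pr (x + s * d)) has_real_derivative dphi x * d) (at 0)"
proof -
  assume x: "x \<in> I0"
  have 1: "(pr has_real_derivative dphi x) (at (x + 0 * d))" using derv[OF x] by simp
  have 2: "((\<lambda>s. x + s * d) has_real_derivative d) (at 0)"
    by (auto intro!: derivative_eq_intros)
  show ?thesis using DERIV_chain2[of pr "dphi x" "\<lambda>s. x + s * d" 0 d UNIV, OF 1 2] by simp
qed

lemma Gr_deriv:
  assumes "\<And>i j. X$i$j \<in> I0"
  shows "((\<lambda>s. Gr C (X + s *\<^sub>R D)) has_real_derivative
          (\<Sum>i\<in>UNIV. \<Sum>j\<in>UNIV. (C$i$j + \<gamma> * dphi (X$i$j)) * D$i$j)) (at 0)"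
proof -
  have "((\<lambda>s. C$i$j * (X$i$j + s * D$i$j) + \<gamma> * pr (X$i$j + s * D$i$j)) has_real_derivative
          (C$i$j + \<gamma> * dphi (X$i$j)) * D$i$j) (at 0)" for i j
  proof -
    have "((\<lambda>s. C$i$j * (X$i$j + s * D$i$j)) has_real_derivative C$i$j * D$i$j) (at 0)"
      by (auto intro!: derivative_eq_intros)
    moreover have "((\<lambda>s. \<gamma> * pr (X$i$j + s * D$i$j)) has_real_derivative \<gamma> * (dphi (X$i$j) * D$i$j)) (at 0)"
      by (rule DERIV_cmult[OF pr_deriv_dir[OF assms]])
    ultimately show ?thesis using DERIV_add by (fastforce simp: algebra_simps)
  qed
  then show ?thesis unfolding Gr_def by (auto intro!: DERIV_sum)
qed

lemma U_abs_diff: "X \<in> U \<Longrightarrow> Y \<in> U \<Longrightarrow> \<bar>X$i$j - Y$i$j\<bar> \<le> 1"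
  using U_nonneg[of X i j] U_nonneg[of Y i j] U_le1[of X i j] U_le1[of Y i j] by auto

lemma alldom_pos: "X \<in> U \<Longrightarrow> (\<And>i j. 0 < X$i$j) \<Longrightarrow> alldom X"
  unfolding alldom_def using I0_0m U_le_m I0dom by auto

lemma I0_pos: "X \<in> U \<Longrightarrow> 0 < X$i$j \<Longrightarrow> X$i$j \<in> I0"
  using I0_0m U_le_m by auto

lemma exists_min:
  "\<exists>M\<in>U. (\<forall>i j. 0 < M$i$j) \<and> (\<forall>Y\<in>U. alldom Y \<longrightarrow> Gr C M \<le> Gr C Y)"
proof -
  obtain p where p: "p > 0" "\<And>i j. p \<le> Xh$i$j" using fin_min[of "\<lambda>i j. Xh$i$j"] Xh_pos by blast
  have pm: "p \<le> m" using p(2)[of undefined undefined] U_le_m[OF Xh_U, of undefined undefined] by simp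
  have pI: "p \<in> I0" using I0_0m pm p(1) by auto
  define B where "B = \<bar>dphi p\<bar> + \<bar>dphi m\<bar>"
  define SC where "SC = (\<Sum>q\<in>(UNIV::('n\<times>'n) set). \<bar>C$fst q$snd q\<bar>)"
  define N where "N = real (card (UNIV::('n\<times>'n) set))"
  define K where "K = - (2 / (\<gamma> * p)) * (2 * SC + \<gamma> * N * B + 1)"
  have B0: "B \<ge> 0" unfolding B_def by simp
  have SC0: "SC \<ge> 0" unfolding SC_def by (auto intro: sum_nonneg)
  have N0: "N \<ge> 0" unfolding N_def by simp
  have "eventually (\<lambda>x. dphi x < K) (at_right 0)"
    using d0 unfolding dphi0_neg_inf_def filterlim_at_bot_dense by auto
  then obtain b where b: "b > 0" "\<And>y. 0 < y \<Longrightarrow> y < b \<Longrightarrow> dphi y < K"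
    unfolding eventually_at_right_field by auto
  define \<delta> where "\<delta> = min (b/2) (p/2)"
  have d0': "0 < \<delta>" "\<delta> < b" "\<delta> \<le> p/2" unfolding \<delta>_def using b p by auto
  have dK: "dphi \<delta> < K" using b d0' by auto
  define Kd where "Kd = {X\<in>U. \<forall>i j. \<delta> \<le> X$i$j}"
  have "\<delta> \<le> Xh$i$j" for i j using p(1) p(2)[of i j] d0'(3) by linarith
  then have XhK: "Xh \<in> Kd" unfolding Kd_def using Xh_U by auto
  have Kd_I0: "X \<in> Kd \<Longrightarrow> X$i$j \<in> I0" for X i j
    unfolding Kd_def using I0_pos d0' by (metis (mono_tags, lifting) mem_Collect_eq order_less_le_trans)
  have "closed Kd"
  proof -
    have "Kd = {X. (\<forall>i j. 0 \<le> X$i$j) \<and> (\<forall>i. (\<Sum>j\<in>UNIV. X$i$j) = \<mu>$i)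
                    \<and> (\<forall>j. (\<Sum>i\<in>UNIV. X$i$j) = \<nu>$j) \<and> (\<forall>i j. \<delta> \<le> X$i$j)}"
      unfolding Kd_def transport_polytope_def by auto
    also have "closed \<dots>"
      by (intro closed_Collect_conj closed_Collect_all closed_Collect_le closed_Collect_eq
          continuous_on_sum cont_entry continuous_on_const)
    finally show ?thesis .
  qed
  moreover have "bounded Kd"
  proof -
    have "norm X \<le> real (CARD('n)) * real (CARD('n))" if "X \<in> Kd" for X
    proof -
      have nX: "norm (X$i) \<le> real (CARD('n))" for i
      proof -
        have "norm (X$i) \<le> (\<Sum>j\<in>UNIV. \<bar>X$i$j\<bar>)" by (rule norm_le_l1_cart)
        also have "\<dots> \<le> (\<Sum>j\<in>(UNIV::'n set). 1)"
          using that U_nonneg U_le1 unfolding Kd_def by (intro sum_mono) auto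
        finally show ?thesis by simp
      qed
      have "norm X \<le> (\<Sum>i\<in>UNIV. norm (X$i))"
        unfolding norm_vec_def by (rule L2_set_le_sum) auto
      also have "\<dots> \<le> (\<Sum>i\<in>(UNIV::'n set). real (CARD('n)))"
        by (intro sum_mono nX)
      finally show ?thesis by simp
    qed
    then show ?thesis unfolding bounded_iff by blast
  qed
  ultimately have cK: "compact Kd" using bounded_closed_imp_seq_compact seq_compact_eq_compact by blast
  have "continuous_on Kd (Gr C)"
  proof -
    have "continuous_on Kd (\<lambda>X. pr (X$i$j))" for i j
      by (rule continuous_on_compose2[OF pr_cont cont_entry]) (use Kd_I0 in auto)
    then show ?thesis unfolding Gr_def
      by (intro continuous_on_sum continuous_on_add continuous_on_mult continuous_on_const cont_entry) auto
  qed
  then obtain M where MK: "M \<in> Kd" and Mmin: "\<And>Y. Y \<in> Kd \<Longrightarrow> Gr C M \<le> Gr C Y"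
    using continuous_attains_inf[OF cK _ ] XhK by blast
  have MU: "M \<in> U" using MK unfolding Kd_def by auto
  have MI0: "M$i$j \<in> I0" for i j using Kd_I0[OF MK] .
  have Mge: "\<delta> \<le> M$i$j" for i j using MK unfolding Kd_def by auto
  have Mgt: "\<delta> < M$i$j" for i j
  proof (rule ccontr)
    assume "\<not> \<delta> < M$i$j"
    then have Mij: "M$i$j = \<delta>" using Mge[of i j] by simp
    define D where "D = Xh - M"
    define t where "t k l = (C$k$l + \<gamma> * dphi (M$k$l)) * D$k$l" for k l
    have tb: "t k l \<le> \<bar>C$k$l\<bar> + \<gamma> * B" for k l
    proof -
      have Dab: "\<bar>D$k$l\<bar> \<le> 1" unfolding D_def using U_abs_diff[OF Xh_U MU] by simp
      have "C$k$l * D$k$l \<le> \<bar>C$k$l\<bar>" using Dab by (rule absbound)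
      moreover have "dphi (M$k$l) * D$k$l \<le> B"
      proof (cases "D$k$l \<ge> 0")
        case True
        have "dphi (M$k$l) \<le> dphi m" using dmono[OF MI0 m_I0 U_le_m[OF MU]] .
        then have "dphi (M$k$l) * D$k$l \<le> dphi m * D$k$l" using True by (rule mult_right_mono)
        also have "\<dots> \<le> \<bar>dphi m\<bar>" using Dab by (rule absbound)
        finally show ?thesis unfolding B_def by simp
      next
        case False
        then have "p \<le> M$k$l" using p(2)[of k l] unfolding D_def by simp
        then have "dphi p \<le> dphi (M$k$l)" using dmono[OF pI MI0] by blast
        then have "dphi (M$k$l) * D$k$l \<le> dphi p * D$k$l" using False
          by (simp add: mult_right_mono_neg)
        also have "\<dots> \<le> \<bar>dphi p\<bar>" using Dab by (rule absbound)
        finally show ?thesis unfolding B_def by simp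
      qed
      ultimately show ?thesis
      proof -
        assume a1: "C$k$l * D$k$l \<le> \<bar>C$k$l\<bar>" and a2: "dphi (M$k$l) * D$k$l \<le> B"
        have "\<gamma> * (dphi (M$k$l) * D$k$l) \<le> \<gamma> * B" using a2 gam by simp
        moreover have "t k l = C$k$l * D$k$l + \<gamma> * (dphi (M$k$l) * D$k$l)"
          unfolding t_def by (simp add: algebra_simps)
        ultimately show ?thesis using a1 by linarith
      qed
    qed
    have tij: "t i j \<le> \<bar>C$i$j\<bar> + \<gamma> * dphi \<delta> * (p/2)"
    proof -
      have Dab: "\<bar>D$i$j\<bar> \<le> 1" unfolding D_def using U_abs_diff[OF Xh_U MU] by simp
      have Dp: "D$i$j \<ge> p/2" unfolding D_def using Mij p(2)[of i j] d0' by simp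
      have "C$i$j * D$i$j \<le> \<bar>C$i$j\<bar>" using Dab by (rule absbound)
      moreover have "dphi \<delta> \<le> 0"
      proof -
        have "K \<le> 0" unfolding K_def using gam p SC0 N0 B0
          by (simp add: mult_nonneg_nonneg)
        then show ?thesis using dK by simp
      qed
      then have "dphi \<delta> * D$i$j \<le> dphi \<delta> * (p/2)" using mult_left_mono_neg[OF Dp] by blast
      then have "\<gamma> * (dphi \<delta> * D$i$j) \<le> \<gamma> * (dphi \<delta> * (p/2))" using gam by simp
      ultimately show ?thesis unfolding t_def Mij by (simp add: algebra_simps)
    qed
    have sumt: "(\<Sum>k\<in>UNIV. \<Sum>l\<in>UNIV. t k l) < 0"
    proof -
      let ?q0 = "(i,j)"
      have "(\<Sum>k\<in>UNIV. \<Sum>l\<in>UNIV. t k l) = (\<Sum>q\<in>UNIV. t (fst q) (snd q))" by (rule dsum)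
      also have "\<dots> = t i j + (\<Sum>q\<in>UNIV - {?q0}. t (fst q) (snd q))"
        by (subst sum.remove[of _ ?q0]) auto
      also have "\<dots> \<le> (\<bar>C$i$j\<bar> + \<gamma> * dphi \<delta> * (p/2)) + (\<Sum>q\<in>UNIV - {?q0}. \<bar>C$fst q$snd q\<bar> + \<gamma> * B)"
        using tij tb by (intro add_mono sum_mono) auto
      also have "(\<Sum>q\<in>UNIV - {?q0}. \<bar>C$fst q$snd q\<bar> + \<gamma> * B) \<le> (\<Sum>q\<in>UNIV. \<bar>C$fst q$snd q\<bar> + \<gamma> * B)"
        using gam B0 by (intro sum_mono2) auto
      also have "(\<Sum>q\<in>(UNIV::('n\<times>'n) set). \<bar>C$fst q$snd q\<bar> + \<gamma> * B) = SC + N * (\<gamma> * B)"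
        unfolding SC_def N_def by (simp add: sum.distrib)
      also have "\<bar>C$i$j\<bar> \<le> SC"
      proof -
        have "\<bar>C$fst ?q0$snd ?q0\<bar> \<le> SC" unfolding SC_def by (rule member_le_sum) auto
        then show ?thesis by simp
      qed
      finally have "(\<Sum>k\<in>UNIV. \<Sum>l\<in>UNIV. t k l) \<le> 2 * SC + \<gamma> * N * B + \<gamma> * dphi \<delta> * (p/2)"
        by (simp add: algebra_simps)
      moreover have "\<gamma> * dphi \<delta> * (p/2) < \<gamma> * K * (p/2)"
        using dK gam p by simp
      moreover have "\<gamma> * K * (p/2) = - (2 * SC + \<gamma> * N * B + 1)"
        unfolding K_def using gam p by (simp add: field_simps)
      ultimately show ?thesis by linarith
    qed
    have der: "((\<lambda>s. Gr C (M + s *\<^sub>R D)) has_real_derivative (\<Sum>k\<in>UNIV. \<Sum>l\<in>UNIV. t k l)) (at 0)"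
      unfolding t_def by (rule Gr_deriv[OF MI0])
    obtain d where d: "d > 0" "\<And>h. h > 0 \<Longrightarrow> h < d \<Longrightarrow> Gr C (M + 0 *\<^sub>R D) > Gr C (M + (0 + h) *\<^sub>R D)"
      using DERIV_neg_dec_right[OF der sumt] by blast
    define h where "h = min (d/2) (1/2)"
    have h: "0 < h" "h < d" "h \<le> 1" unfolding h_def using d by auto
    have eqh: "M + h *\<^sub>R D = (1 - h) *\<^sub>R M + h *\<^sub>R Xh" unfolding D_def by (simp add: algebra_simps)
    have "M + h *\<^sub>R D \<in> Kd"
    proof -
      have "(1 - h) *\<^sub>R M + h *\<^sub>R Xh \<in> U" using U_convex[OF MU Xh_U] h by auto
      moreover have "\<delta> \<le> ((1 - h) *\<^sub>R M + h *\<^sub>R Xh)$k$l" for k l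
      proof -
        have "\<delta> \<le> Xh$k$l" using XhK unfolding Kd_def by auto
        then have "(1 - h) * \<delta> + h * \<delta> \<le> (1 - h) * M$k$l + h * Xh$k$l"
          using Mge[of k l] h by (intro add_mono mult_left_mono) auto
        then show ?thesis by (simp add: algebra_simps)
      qed
      ultimately show ?thesis unfolding eqh Kd_def by auto
    qed
    then have "Gr C M \<le> Gr C (M + h *\<^sub>R D)" by (rule Mmin)
    moreover have "Gr C M > Gr C (M + h *\<^sub>R D)" using d(2)[OF h(1,2)] by simp
    ultimately show False by simp
  qed
  have Mpos: "0 < M$i$j" for i j using Mgt[of i j] d0' by simp
  have Mdom: "alldom M" by (rule alldom_pos[OF MU Mpos])
  have glob: "Gr C M \<le> Gr C Y" if YU: "Y \<in> U" and Yd: "alldom Y" for Y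
  proof (rule ccontr)
    assume "\<not> ?thesis"
    then have lt: "Gr C Y < Gr C M" by simp
    obtain \<eta> where eta: "\<eta> > 0" "\<And>k l. \<eta> \<le> M$k$l - \<delta>"
      using fin_min[of "\<lambda>k l. M$k$l - \<delta>"] Mgt by auto
    define h where "h = min (\<eta>/2) (1/2)"
    have h: "0 < h" "h \<le> 1" "h < \<eta>" unfolding h_def using eta by auto
    let ?Z = "(1 - h) *\<^sub>R M + h *\<^sub>R Y"
    have "?Z \<in> Kd"
    proof -
      have "?Z \<in> U" using U_convex[OF MU YU] h by auto
      moreover have "\<delta> \<le> ?Z$k$l" for k l
      proof -
        have "\<bar>Y$k$l - M$k$l\<bar> \<le> 1" using U_abs_diff[OF YU MU] by simp
        then have "-1 \<le> Y$k$l - M$k$l" by simp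
        then have "h * (-1) \<le> h * (Y$k$l - M$k$l)" using h by (intro mult_left_mono) auto
        then have "h * (Y$k$l - M$k$l) \<ge> - h" by simp
        moreover have "?Z$k$l = M$k$l + h * (Y$k$l - M$k$l)" by (simp add: algebra_simps)
        ultimately show ?thesis using eta(2)[of k l] h by simp
      qed
      ultimately show ?thesis unfolding Kd_def by auto
    qed
    then have "Gr C M \<le> Gr C ?Z" by (rule Mmin)
    also have "Gr C ?Z \<le> (1 - h) * Gr C M + h * Gr C Y" by (rule Gr_convex[OF Mdom Yd]) (use h in auto)
    also have "\<dots> < Gr C M"
    proof -
      have "h * Gr C Y < h * Gr C M" using lt h by simp
      then show ?thesis by (simp add: algebra_simps)
    qed
    finally show False by simp
  qed
  show ?thesis using MU Mpos glob by blast
qed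

lemma Gr_strict:
  assumes X: "\<And>i j. X$i$j \<in> I0" and Y: "\<And>i j. Y$i$j \<in> I0" and ne: "X \<noteq> Y"
  shows "Gr C ((1/2) *\<^sub>R X + (1/2) *\<^sub>R Y) < (1/2) * Gr C X + (1/2) * Gr C Y"
proof -
  obtain k l where kl: "X$k$l \<noteq> Y$k$l" using ne by (metis vec_eq_iff)
  define g where "g i j = C$i$j * ((1/2) * X$i$j + (1/2) * Y$i$j) + \<gamma> * pr ((1/2) * X$i$j + (1/2) * Y$i$j)" for i j
  define h where "h i j = (1/2) * (C$i$j * X$i$j + \<gamma> * pr (X$i$j)) + (1/2) * (C$i$j * Y$i$j + \<gamma> * pr (Y$i$j))" for i j
  have le: "g i j \<le> h i j" for i j
  proof -
    have "pr ((1 - 1/2) * X$i$j + (1/2) * Y$i$j) \<le> (1 - 1/2) * pr (X$i$j) + (1/2) * pr (Y$i$j)"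
      using convex_onD[OF convx, of "1/2" "X$i$j" "Y$i$j"] X Y I0dom by auto
    then have "\<gamma> * pr ((1/2) * X$i$j + (1/2) * Y$i$j) \<le> \<gamma> * ((1/2) * pr (X$i$j) + (1/2) * pr (Y$i$j))"
      using gam by (intro mult_left_mono) auto
    then show ?thesis unfolding g_def h_def by (simp add: algebra_simps)
  qed
  have lt: "g k l < h k l"
  proof -
    have "pr ((1 - 1/2) * X$k$l + (1/2) * Y$k$l) < (1 - 1/2) * pr (X$k$l) + (1/2) * pr (Y$k$l)"
    proof -
      have "\<forall>t. X$k$l \<noteq> Y$k$l \<and> 0 < t \<and> t < 1 \<longrightarrow>
        pr ((1 - t) * X$k$l + t * Y$k$l) < (1 - t) * pr (X$k$l) + t * pr (Y$k$l)"
        using sconv X Y unfolding strictly_convex_on_def by blast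
      then have "X$k$l \<noteq> Y$k$l \<and> 0 < (1/2::real) \<and> (1/2::real) < 1 \<longrightarrow>
        pr ((1 - 1/2) * X$k$l + 1/2 * Y$k$l) < (1 - 1/2) * pr (X$k$l) + 1/2 * pr (Y$k$l)"
        by (rule spec)
      then show ?thesis using kl by simp
    qed
    then have "\<gamma> * pr ((1/2) * X$k$l + (1/2) * Y$k$l) < \<gamma> * ((1/2) * pr (X$k$l) + (1/2) * pr (Y$k$l))"
      using gam by (intro mult_strict_left_mono) auto
    then show ?thesis unfolding g_def h_def by (simp add: algebra_simps)
  qed
  have "(\<Sum>q\<in>UNIV. g (fst q) (snd q)) < (\<Sum>q\<in>UNIV. h (fst q) (snd q))"
    by (rule sum_strict_mono_ex1) (use le lt in \<open>auto intro!: bexI[of _ "(k,l)"]\<close>)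
  then have "(\<Sum>i\<in>UNIV. \<Sum>j\<in>UNIV. g i j) < (\<Sum>i\<in>UNIV. \<Sum>j\<in>UNIV. h i j)" by (simp only: dsum)
  moreover have "Gr C ((1/2) *\<^sub>R X + (1/2) *\<^sub>R Y) = (\<Sum>i\<in>UNIV. \<Sum>j\<in>UNIV. g i j)"
    unfolding Gr_def g_def by simp
  moreover have "(\<Sum>i\<in>UNIV. \<Sum>j\<in>UNIV. h i j) = (1/2) * Gr C X + (1/2) * Gr C Y"
  proof -
    have gen: "(\<Sum>i\<in>UNIV. \<Sum>j\<in>UNIV. (1/2) * a i j + (1/2) * b i j)
       = (1/2) * (\<Sum>i\<in>UNIV. \<Sum>j\<in>UNIV. a i j) + (1/2) * (\<Sum>i\<in>UNIV. \<Sum>j\<in>UNIV. b i j)"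
      for a b :: "'n \<Rightarrow> 'n \<Rightarrow> real"
      by (simp add: sum.distrib sum_distrib_left)
    show ?thesis unfolding h_def Gr_def by (rule gen)
  qed
  ultimately show ?thesis by simp
qed

lemma forward_char:
  fixes C :: "real^'n^'n"
  defines "F \<equiv> forward phi \<gamma> \<mu> \<nu> C"
  shows "F \<in> U \<and> (\<forall>i j. 0 < F$i$j) \<and> (\<forall>Y\<in>U. alldom Y \<longrightarrow> Gr C F \<le> Gr C Y)"
proof -
  obtain M where MU: "M \<in> U" and Mpos: "\<And>i j. 0 < M$i$j"
    and glob: "\<And>Y. Y \<in> U \<Longrightarrow> alldom Y \<Longrightarrow> Gr C M \<le> Gr C Y"
    using exists_min[of C] by blast
  have Mdom: "alldom M" using alldom_pos[OF MU Mpos] .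
  have MI0: "M$i$j \<in> I0" for i j using I0_pos[OF MU Mpos] .
  have Mopt: "Gobj C M \<le> Gobj C Y" if "Y \<in> U" for Y
  proof (cases "alldom Y")
    case True then show ?thesis using G_eq[OF Mdom] G_eq[OF True] glob[OF that True] by simp
  next
    case False then show ?thesis using G_inf by simp
  qed
  have uniq: "X = M" if XU: "X \<in> U" and Xopt: "\<forall>Y\<in>U. Gobj C X \<le> Gobj C Y" for X
  proof (rule ccontr)
    assume ne: "X \<noteq> M"
    have "Gobj C X \<le> Gobj C M" using Xopt MU by blast
    then have Xdom: "alldom X" using G_inf[of X C] G_eq[OF Mdom, of C] by force
    have GXM: "Gr C X \<le> Gr C M" using \<open>Gobj C X \<le> Gobj C M\<close> G_eq[OF Mdom] G_eq[OF Xdom] by simp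
    let ?Y = "(1 - 1/2) *\<^sub>R M + (1/2) *\<^sub>R X"
    have YU: "?Y \<in> U" using U_convex[OF MU XU, of "1/2"] by simp
    have Ypos: "0 < ?Y$i$j" for i j using Mpos[of i j] U_nonneg[OF XU, of i j] by simp
    have YI0: "?Y$i$j \<in> I0" for i j using I0_pos[OF YU Ypos] .
    have Ydom: "alldom ?Y" using alldom_pos[OF YU Ypos] .
    have "Gr C ?Y \<le> (1 - 1/2) * Gr C M + (1/2) * Gr C X" by (rule Gr_convex[OF Mdom Xdom]) auto
    then have GY: "Gr C ?Y \<le> Gr C M" using GXM by simp
    have YneM: "?Y \<noteq> M"
    proof
      assume "?Y = M"
      then have "(1/2) *\<^sub>R X = (1/2) *\<^sub>R M" by (metis add_diff_cancel_left' diff_add_cancel scaleR_collapse)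
      then show False using ne by simp
    qed
    let ?Z = "(1/2) *\<^sub>R ?Y + (1/2) *\<^sub>R M"
    have ZU: "?Z \<in> U" using U_convex[OF YU MU, of "1/2"] by simp
    have Zpos: "0 < ?Z$i$j" for i j 
    proof -
      have e: "?Z$i$j = (M$i$j/2 + X$i$j/2)/2 + M$i$j/2" by simp
      show ?thesis unfolding e using Mpos[of i j] U_nonneg[OF XU, of i j] by (simp add: field_simps)
    qed
    have Zdom: "alldom ?Z" using alldom_pos[OF ZU Zpos] .
    have "Gr C ?Z < (1/2) * Gr C ?Y + (1/2) * Gr C M" by (rule Gr_strict[OF YI0 MI0 YneM])
    also have "\<dots> \<le> Gr C M" using GY by simp
    finally have "Gr C ?Z < Gr C M" .
    moreover have "Gr C M \<le> Gr C ?Z" by (rule glob[OF ZU Zdom])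
    ultimately show False by simp
  qed
  have "F = M" unfolding F_def forward_def
  proof (rule the_equality)
    show "M \<in> U \<and> (\<forall>Y\<in>U. ereal (inner C M) + ereal \<gamma> * mat_sum phi M \<le> ereal (inner C Y) + ereal \<gamma> * mat_sum phi Y)"
      using MU Mopt unfolding Gobj_def by blast
  next
    fix X assume "X \<in> U \<and> (\<forall>Y\<in>U. ereal (inner C X) + ereal \<gamma> * mat_sum phi X \<le> ereal (inner C Y) + ereal \<gamma> * mat_sum phi Y)"
    then show "X = M" using uniq unfolding Gobj_def by blast
  qed
  then show ?thesis using MU Mpos glob by simp
qed

end



context P6 begin

abbreviation "F C \<equiv> forward phi \<gamma> \<mu> \<nu> C"

lemma F_U: "F C \<in> U" and F_pos: "0 < F C $i$j"
  and F_glob: "Y \<in> U \<Longrightarrow> alldom Y \<Longrightarrow> Gr C (F C) \<le> Gr C Y"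
  using forward_char[of C] by auto

lemma F_I0: "F C $i$j \<in> I0" using I0_pos[OF F_U F_pos] .

lemma sum_delta2: fixes f :: "'a::finite \<Rightarrow> real"
  shows "(\<Sum>l\<in>UNIV. f l * ((if l = j then 1 else 0) - (if l = k then 1 else 0))) = f j - f k"
proof -
  have d: "(\<Sum>l\<in>UNIV. f l * (if l = a then 1 else 0)) = f a" for a
  proof -
    have "(\<Sum>l\<in>UNIV. f l * (if l = a then 1 else 0)) = (\<Sum>l\<in>UNIV. if l = a then f l else 0)"
      by (rule sum.cong) auto
    also have "\<dots> = f a" by (simp add: sum.delta)
    finally show ?thesis .
  qed
  show ?thesis by (simp only: right_diff_distrib sum_subtractf d)
qed

lemma sum_delta2': fixes f :: "'a::finite \<Rightarrow> real"
  shows "(\<Sum>l\<in>UNIV. ((if l = j then 1 else 0) - (if l = k then 1 else 0)) * f l) = f j - f k"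
proof -
  have d: "(\<Sum>l\<in>UNIV. (if l = a then 1 else 0) * f l) = f a" for a
  proof -
    have "(\<Sum>l\<in>UNIV. (if l = a then 1 else 0) * f l) = (\<Sum>l\<in>UNIV. if l = a then f l else 0)"
      by (rule sum.cong) auto
    also have "\<dots> = f a" by (simp add: sum.delta)
    finally show ?thesis .
  qed
  show ?thesis by (simp only: left_diff_distrib sum_subtractf d)
qed

lemma KKT: "\<exists>a b. \<forall>i j. dphi (F C $i$j) = (a i + b j - C$i$j) / \<gamma>"
proof -
  define k0 :: 'n where "k0 = undefined"
  define W where "W k l = C$k$l + \<gamma> * dphi (F C $k$l)" for k l
  obtain \<eta> where eta: "\<eta> > 0" "\<And>k l. \<eta> \<le> F C $k$l" using fin_min[of "\<lambda>k l. F C $k$l"] F_pos by blast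
  have key: "W i j = W i k0 + W k0 j - W k0 k0" for i j
  proof -
    define e where "e x y = (if x = y then 1 else (0::real))" for x y :: 'n
    define D :: "real^'n^'n" where "D = (\<chi> k l. (e k i - e k k0) * (e l j - e l k0))"
    have De: "D$k$l = (e k i - e k k0) * (e l j - e l k0)" for k l unfolding D_def by simp
    have Dab: "\<bar>D$k$l\<bar> \<le> 1" for k l unfolding De e_def by auto
    have rs: "(\<Sum>l\<in>UNIV. D$k$l) = 0" for k
    proof -
      have "(\<Sum>l\<in>UNIV. D$k$l) = (e k i - e k k0) * (\<Sum>l\<in>UNIV. (e l j - e l k0))"
        unfolding De by (simp add: sum_distrib_left)
      also have "(\<Sum>l\<in>UNIV. (e l j - e l k0)) = 0" unfolding e_def by (simp add: sum_subtractf)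
      finally show ?thesis by simp
    qed
    have cs: "(\<Sum>k\<in>UNIV. D$k$l) = 0" for l
    proof -
      have "(\<Sum>k\<in>UNIV. D$k$l) = (\<Sum>k\<in>UNIV. (e k i - e k k0)) * (e l j - e l k0)"
        unfolding De by (simp add: sum_distrib_right)
      also have "(\<Sum>k\<in>UNIV. (e k i - e k k0)) = 0" unfolding e_def by (simp add: sum_subtractf)
      finally show ?thesis by simp
    qed
    have inU: "F C + s *\<^sub>R D \<in> U" and posS: "\<And>k l. 0 < (F C + s *\<^sub>R D)$k$l" if s: "\<bar>s\<bar> < \<eta>" for s
    proof -
      show pos: "0 < (F C + s *\<^sub>R D)$k$l" for k l
      proof -
        have "s * D$k$l \<ge> - \<bar>s\<bar>"
        proof -
          have "\<bar>s * D$k$l\<bar> \<le> \<bar>s\<bar>" using Dab[of k l] by (simp add: abs_mult mult_left_le)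
          then show ?thesis by linarith
        qed
        then show ?thesis using eta(2)[of k l] s by simp
      qed
      show "F C + s *\<^sub>R D \<in> U"
        unfolding transport_polytope_def
        using pos U_row[OF F_U] U_col[OF F_U] rs cs
        by (auto simp: sum.distrib less_imp_le simp flip: sum_distrib_left)
    qed
    have der: "((\<lambda>s. Gr C (F C + s *\<^sub>R D)) has_real_derivative
          (\<Sum>k\<in>UNIV. \<Sum>l\<in>UNIV. W k l * D$k$l)) (at 0)"
      unfolding W_def by (rule Gr_deriv[OF F_I0])
    have "(\<Sum>k\<in>UNIV. \<Sum>l\<in>UNIV. W k l * D$k$l) = 0"
    proof (rule DERIV_local_min[OF der eta(1)], intro allI impI)
      fix y :: real assume "\<bar>0 - y\<bar> < \<eta>"
      then have y: "\<bar>y\<bar> < \<eta>" by simp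
      have "Gr C (F C) \<le> Gr C (F C + y *\<^sub>R D)"
        by (rule F_glob[OF inU[OF y] alldom_pos[OF inU[OF y] posS[OF y]]])
      then show "Gr C (F C + 0 *\<^sub>R D) \<le> Gr C (F C + y *\<^sub>R D)" by simp
    qed
    moreover have "(\<Sum>k\<in>UNIV. \<Sum>l\<in>UNIV. W k l * D$k$l) = (W i j - W i k0) - (W k0 j - W k0 k0)"
    proof -
      have "(\<Sum>k\<in>UNIV. \<Sum>l\<in>UNIV. W k l * D$k$l)
          = (\<Sum>k\<in>UNIV. (e k i - e k k0) * (\<Sum>l\<in>UNIV. W k l * ((if l = j then 1 else 0) - (if l = k0 then 1 else 0))))"
        unfolding De e_def by (simp add: sum_distrib_left mult_ac)
      also have "\<dots> = (\<Sum>k\<in>UNIV. ((if k = i then 1 else 0) - (if k = k0 then 1 else 0)) * (W k j - W k k0))"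
        unfolding sum_delta2 e_def by (rule refl)
      also have "\<dots> = (W i j - W i k0) - (W k0 j - W k0 k0)"
        by (rule sum_delta2'[of i k0 "\<lambda>k. W k j - W k k0"])
      finally show ?thesis .
    qed
    ultimately show ?thesis by simp
  qed
  show ?thesis
  proof (intro exI allI)
    fix i j
    have "dphi (F C $i$j) = (W i j - C$i$j) / \<gamma>" unfolding W_def using gam by simp
    also have "\<dots> = (W i k0 + (W k0 j - W k0 k0) - C$i$j) / \<gamma>" using key[of i j] by simp
    finally show "dphi (F C $i$j) = ((\<lambda>i. W i k0) i + (\<lambda>j. W k0 j - W k0 k0) j - C$i$j) / \<gamma>" .
  qed
qed

abbreviation "psi \<equiv> fconj phi"
definition "psr y = real_of_ereal (psi y)"

lemma FY: "ereal (x * y) - phi x \<le> psi y"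
  unfolding fconj_def by (rule SUP_upper) auto

lemma FY': "x \<in> edom phi \<Longrightarrow> ereal (x * y - pr x) \<le> psi y"
  using FY[of x y] phi_eq[of x] by simp

lemma half_dom: "1/2 \<in> edom phi"
proof -
  have "(1/2::real) \<in> {0<..<1}" by simp
  then show ?thesis using sub01 I0dom by blast
qed

lemma psi_ninf: "psi y \<noteq> -\<infinity>"
  using FY'[OF half_dom, of y] by auto

lemma psi_eq: "y \<in> edom psi \<Longrightarrow> psi y = ereal (psr y)"
  using psi_ninf[of y] unfolding edom_def psr_def by (cases "psi y") auto

lemma conj_at: assumes x: "x \<in> I0" shows "psi (dphi x) = ereal (x * dphi x - pr x)"
proof (rule antisym)
  show "psi (dphi x) \<le> ereal (x * dphi x - pr x)"
    unfolding fconj_def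
  proof (rule SUP_least)
    fix x' :: real
    show "ereal (x' * dphi x) - phi x' \<le> ereal (x * dphi x - pr x)"
    proof (cases "x' \<in> edom phi")
      case True
      have "pr x' \<ge> pr x + dphi x * (x' - x)" using tangent[OF x True] .
      then have "x' * dphi x - pr x' \<le> x * dphi x - pr x" by (simp add: algebra_simps)
      then show ?thesis using phi_eq[OF True] by simp
    next
      case False then show ?thesis using phi_notdom by simp
    qed
  qed
next
  show "ereal (x * dphi x - pr x) \<le> psi (dphi x)" using FY'[OF I0dom[OF x]] .
qed

lemma conj_at_r: "x \<in> I0 \<Longrightarrow> psr (dphi x) = x * dphi x - pr x"
  using conj_at unfolding psr_def by simp

lemma conj_dom: "x \<in> I0 \<Longrightarrow> dphi x \<in> edom psi"
  using conj_at unfolding edom_def by simp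

lemma psi_conv_ineq:
  assumes "y1 \<in> edom psi" "y2 \<in> edom psi" "0 \<le> t" "t \<le> 1"
  shows "psi ((1 - t) * y1 + t * y2) \<le> ereal ((1 - t) * psr y1 + t * psr y2)"
  unfolding fconj_def
proof (rule SUP_least)
  fix x :: real
  show "ereal (x * ((1 - t) * y1 + t * y2)) - phi x \<le> ereal ((1 - t) * psr y1 + t * psr y2)"
  proof (cases "x \<in> edom phi")
    case True
    have a: "x * y1 - pr x \<le> psr y1" using FY'[OF True, of y1] psi_eq[OF assms(1)] by simp
    have b: "x * y2 - pr x \<le> psr y2" using FY'[OF True, of y2] psi_eq[OF assms(2)] by simp
    have "x * ((1 - t) * y1 + t * y2) - pr x = (1 - t) * (x * y1 - pr x) + t * (x * y2 - pr x)"
      by (simp add: algebra_simps)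
    also have "\<dots> \<le> (1 - t) * psr y1 + t * psr y2"
      using a b assms(3,4) by (intro add_mono mult_left_mono) auto
    finally show ?thesis using phi_eq[OF True] by simp
  next
    case False then show ?thesis using phi_notdom by simp
  qed
qed

lemma psi_dom_convex: "convex (edom psi)"
proof (rule convexI)
  fix y1 y2 :: real and u v :: real
  assume a: "y1 \<in> edom psi" "y2 \<in> edom psi" "0 \<le> u" "0 \<le> v" "u + v = 1"
  then have "psi ((1 - v) * y1 + v * y2) \<le> ereal ((1 - v) * psr y1 + v * psr y2)"
    by (intro psi_conv_ineq) auto
  moreover have "(1 - v) * y1 + v * y2 = u *\<^sub>R y1 + v *\<^sub>R y2" using a by simp
  ultimately show "u *\<^sub>R y1 + v *\<^sub>R y2 \<in> edom psi" unfolding edom_def by auto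
qed

lemma psi_convex_on: "convex_on (edom psi) psr"
proof (rule convex_onI)
  fix t y1 y2 :: real
  assume a: "0 < t" "t < 1" "y1 \<in> edom psi" "y2 \<in> edom psi"
  have "(1 - t) *\<^sub>R y1 + t *\<^sub>R y2 \<in> edom psi"
    using psi_dom_convex a by (intro convexD_alt) auto
  then have "psi ((1 - t) * y1 + t * y2) = ereal (psr ((1 - t) * y1 + t * y2))" using psi_eq by simp
  moreover have "psi ((1 - t) * y1 + t * y2) \<le> ereal ((1 - t) * psr y1 + t * psr y2)"
    using a by (intro psi_conv_ineq) auto
  ultimately show "psr ((1 - t) *\<^sub>R y1 + t *\<^sub>R y2) \<le> (1 - t) * psr y1 + t * psr y2" by simp
qed (fact psi_dom_convex)

lemma conj_rev:
  assumes z: "z \<in> interior (edom psi)" and d: "(psr has_real_derivative x) (at z)" and x: "x \<in> I0"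
  shows "psi z = ereal (x * z - pr x)"
proof -
  have zd: "z \<in> edom psi" using z interior_subset by blast
  have "psr (dphi x) - psr z \<ge> x * (dphi x - z)"
    apply (rule convex_on_imp_above_tangent[OF psi_convex_on _ z conj_dom[OF x]])
    using psi_dom_convex convex_connected apply blast
    using d has_field_derivative_at_within by blast
  then have "psr z \<le> x * z - pr x" using conj_at_r[OF x] by (simp add: algebra_simps)
  moreover have "x * z - pr x \<le> psr z" using FY'[OF I0dom[OF x], of z] psi_eq[OF zd] by simp
  ultimately show ?thesis using psi_eq[OF zd] by simp
qed

lemma conj_deriv:
  assumes x: "x \<in> I0"
  shows "dphi x \<in> interior (edom psi) \<and> (psr has_real_derivative x) (at (dphi x))"
proof -
  obtain d where d: "d > 0" "cball x d \<subseteq> I0" using open_contains_cball x openI0 by blast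
  have ivl: "{x-d..x+d} \<subseteq> I0"
  proof
    fix w assume "w \<in> {x-d..x+d}"
    then have "w \<in> cball x d" unfolding mem_cball dist_real_def by auto
    then show "w \<in> I0" using d by blast
  qed
  have xm: "x - d \<in> I0" and xp: "x + d \<in> I0" using ivl d by auto
  define z where "z = dphi x"
  define z1 where "z1 = dphi (x - d)"
  define z2 where "z2 = dphi (x + d)"
  have z12: "z1 < z" "z < z2" unfolding z_def z1_def z2_def using dsmono xm xp x d by auto
  have cont: "continuous_on {x-d..x+d} dphi" using contd ivl continuous_on_subset by blast
  have surj: "y \<in> dphi ` {x-d..x+d}" if yy: "y \<in> {z1<..<z2}" for y
  proof -
    obtain w where "x - d \<le> w" "w \<le> x + d" "dphi w = y"
      using IVT'[of dphi "x-d" y "x+d", OF _ _ _ cont] yy d unfolding z1_def z2_def by auto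
    then show ?thesis by auto
  qed
  have inj: "inj_on dphi {x-d..x+d}"
  proof (rule inj_onI)
    fix a b assume ab: "a \<in> {x-d..x+d}" "b \<in> {x-d..x+d}" "dphi a = dphi b"
    show "a = b"
    proof (rule ccontr)
      assume "a \<noteq> b"
      then have "a < b \<or> b < a" by auto
      then show False using dsmono ab ivl by (metis in_mono less_irrefl)
    qed
  qed
  define g where "g = inv_into {x-d..x+d} dphi"
  have gf: "g (dphi w) = w" if "w \<in> {x-d..x+d}" for w
    unfolding g_def using inv_into_f_f[OF inj that] .
  have fg: "dphi (g y) = y" and gI: "g y \<in> I0" if "y \<in> {z1<..<z2}" for y
  proof -
    show "dphi (g y) = y" unfolding g_def using f_inv_into_f[OF surj[OF that]] .
    have "g y \<in> {x-d..x+d}" unfolding g_def using inv_into_into[OF surj[OF that]] .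
    then show "g y \<in> I0" using ivl by blast
  qed
  have gx: "g z = x" unfolding z_def using gf[of x] d by simp
  have isg: "isCont g z"
  proof -
    have "isCont g (dphi x)"
    proof (rule isCont_inverse_function[where f=dphi and g=g and x=x and d=d, OF d(1)])
      fix w assume "\<bar>w - x\<bar> \<le> d"
      then have w: "w \<in> {x-d..x+d}" by auto
      show "g (dphi w) = w" using gf[OF w] .
    next
      fix w assume "\<bar>w - x\<bar> \<le> d"
      then have w: "w \<in> {x-d..x+d}" by auto
      have "w \<in> I0" using w ivl by blast
      then show "isCont dphi w" using contd openI0 continuous_on_eq_continuous_at by blast
    qed
    then show ?thesis unfolding z_def .
  qed
  have sub: "{z1<..<z2} \<subseteq> edom psi"
  proof
    fix y assume y: "y \<in> {z1<..<z2}"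
    have "dphi (g y) \<in> edom psi" using conj_dom[OF gI[OF y]] .
    then show "y \<in> edom psi" using fg[OF y] by simp
  qed
  have zint: "z \<in> interior (edom psi)"
    by (rule interiorI[of "{z1<..<z2}"]) (use z12 sub in auto)
  have zd: "z \<in> edom psi" using sub z12 by auto
  have pz: "psr z = x * z - pr x" unfolding z_def using conj_at_r[OF x] .
  have bound: "\<bar>(psr y - psr z) / (y - z) - x\<bar> \<le> \<bar>g y - x\<bar>" if y: "y \<in> {z1<..<z2} - {z}" for y
  proof -
    have y1: "y \<in> {z1<..<z2}" and yz: "y \<noteq> z" using y by auto
    have yd: "y \<in> edom psi" using sub y1 by blast
    have py: "psr y = g y * y - pr (g y)" using conj_at_r[OF gI[OF y1]] fg[OF y1] by simp
    have lo: "x * y - pr x \<le> psr y" using FY'[OF I0dom[OF x], of y] psi_eq[OF yd] by simp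
    have up: "g y * z - pr (g y) \<le> psr z" using FY'[OF I0dom[OF gI[OF y1]], of z] psi_eq[OF zd] by simp
    define num where "num = psr y - psr z - x * (y - z)"
    have n0: "0 \<le> num" unfolding num_def using lo pz by (simp add: algebra_simps)
    have n1: "num \<le> (g y - x) * (y - z)" unfolding num_def using up py by (simp add: algebra_simps)
    have "\<bar>num\<bar> \<le> \<bar>g y - x\<bar> * \<bar>y - z\<bar>"
      using n0 n1 by (metis abs_ge_self abs_mult abs_of_nonneg order_trans)
    moreover have "(psr y - psr z) / (y - z) - x = num / (y - z)"
      unfolding num_def using yz by (simp add: field_simps)
    moreover have "\<bar>y - z\<bar> > 0" using yz by simp
    ultimately show ?thesis by (simp add: abs_divide divide_le_eq)
  qed
  have "((\<lambda>y. (psr y - psr z) / (y - z)) \<longlongrightarrow> x) (at z)"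
  proof -
    have ev: "eventually (\<lambda>y. y \<in> {z1<..<z2} - {z}) (at z)"
      by (rule eventually_at_in_open) (use z12 in auto)
    have "(g \<longlongrightarrow> x) (at z)" using isg gx unfolding isCont_def by simp
    then have "((\<lambda>y. g y - x) \<longlongrightarrow> 0) (at z)" using Lim_null by blast
    then have t0: "((\<lambda>y. \<bar>g y - x\<bar>) \<longlongrightarrow> 0) (at z)" by (rule tendsto_rabs_zero)
    have "((\<lambda>y. (psr y - psr z) / (y - z) - x) \<longlongrightarrow> 0) (at z)"
      by (rule Lim_null_comparison[OF _ t0]) (use ev bound in \<open>auto elim: eventually_mono\<close>)
    then show ?thesis using Lim_null by blast
  qed
  then have "(psr has_real_derivative x) (at z)" by (simp add: has_field_derivative_iff)
  then show ?thesis using zint unfolding z_def by simp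
qed

end



context P6 begin

lemma marg:
  assumes "X \<in> U" "Y \<in> U"
  shows "(\<Sum>i\<in>UNIV. \<Sum>j\<in>UNIV. (a i + b j) * (X$i$j - Y$i$j)) = 0"
proof -
  have 1: "(\<Sum>i\<in>UNIV. \<Sum>j\<in>UNIV. a i * (X$i$j - Y$i$j)) = 0"
  proof -
    have "(\<Sum>i\<in>UNIV. \<Sum>j\<in>UNIV. a i * (X$i$j - Y$i$j))
        = (\<Sum>i\<in>UNIV. a i * ((\<Sum>j\<in>UNIV. X$i$j) - (\<Sum>j\<in>UNIV. Y$i$j)))"
      by (simp add: sum_distrib_left sum_subtractf right_diff_distrib)
    also have "\<dots> = 0" using U_row[OF assms(1)] U_row[OF assms(2)] by simp
    finally show ?thesis .
  qed
  have 2: "(\<Sum>i\<in>UNIV. \<Sum>j\<in>UNIV. b j * (X$i$j - Y$i$j)) = 0"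
  proof -
    have "(\<Sum>i\<in>UNIV. \<Sum>j\<in>UNIV. b j * (X$i$j - Y$i$j)) = (\<Sum>j\<in>UNIV. \<Sum>i\<in>UNIV. b j * (X$i$j - Y$i$j))"
      by (rule sum.swap)
    also have "\<dots> = (\<Sum>j\<in>UNIV. b j * ((\<Sum>i\<in>UNIV. X$i$j) - (\<Sum>i\<in>UNIV. Y$i$j)))"
      by (simp add: sum_distrib_left sum_subtractf right_diff_distrib)
    also have "\<dots> = 0" using U_col[OF assms(1)] U_col[OF assms(2)] by simp
    finally show ?thesis .
  qed
  have "(\<Sum>i\<in>UNIV. \<Sum>j\<in>UNIV. (a i + b j) * (X$i$j - Y$i$j))
      = (\<Sum>i\<in>UNIV. \<Sum>j\<in>UNIV. a i * (X$i$j - Y$i$j)) + (\<Sum>i\<in>UNIV. \<Sum>j\<in>UNIV. b j * (X$i$j - Y$i$j))"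
    by (simp add: distrib_right sum.distrib)
  then show ?thesis using 1 2 by simp
qed

definition "Rv C = - (\<Sum>i\<in>UNIV. \<Sum>j\<in>UNIV. pr (F C $i$j)) + (1/\<gamma>) * (\<Sum>i\<in>UNIV. \<Sum>j\<in>UNIV. C$i$j * (Xh$i$j - F C $i$j))"
definition "Phh = (\<Sum>i\<in>UNIV. \<Sum>j\<in>UNIV. pr (Xh$i$j))"

lemma Xh_dom: "Xh$i$j \<in> edom phi" using I0dom[OF I0_pos[OF Xh_U Xh_pos]] .
lemma F_dom: "F C $i$j \<in> edom phi" using I0dom[OF F_I0] .

lemma breg_eq: "bregman_div_mat phi dphi Xh (F C) = ereal (Rv C + Phh)"
proof -
  obtain a b where ab: "\<And>i j. dphi (F C $i$j) = (a i + b j - C$i$j) / \<gamma>" using KKT[of C] by blast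
  have t: "pr (Xh$i$j) - pr (F C $i$j) - (Xh$i$j - F C $i$j) * dphi (F C $i$j)
       = pr (Xh$i$j) - pr (F C $i$j) - (1/\<gamma>) * ((a i + b j) * (Xh$i$j - F C $i$j))
         + (1/\<gamma>) * (C$i$j * (Xh$i$j - F C $i$j))" for i j
    unfolding ab using gam by (simp add: field_simps)
  have "bregman_div_mat phi dphi Xh (F C)
      = ereal (\<Sum>i\<in>UNIV. \<Sum>j\<in>UNIV. pr (Xh$i$j) - pr (F C $i$j) - (Xh$i$j - F C $i$j) * dphi (F C $i$j))"
    unfolding bregman_div_mat_def bregman_div_def by (simp add: phi_eq[OF Xh_dom] phi_eq[OF F_dom])
  also have "(\<Sum>i\<in>UNIV. \<Sum>j\<in>UNIV. pr (Xh$i$j) - pr (F C $i$j) - (Xh$i$j - F C $i$j) * dphi (F C $i$j))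
      = Phh - (\<Sum>i\<in>UNIV. \<Sum>j\<in>UNIV. pr (F C $i$j))
        - (1/\<gamma>) * (\<Sum>i\<in>UNIV. \<Sum>j\<in>UNIV. (a i + b j) * (Xh$i$j - F C $i$j))
        + (1/\<gamma>) * (\<Sum>i\<in>UNIV. \<Sum>j\<in>UNIV. C$i$j * (Xh$i$j - F C $i$j))"
    unfolding t Phh_def by (simp add: sum.distrib sum_subtractf sum_distrib_left)
  also have "\<dots> = Rv C + Phh" unfolding Rv_def marg[OF Xh_U F_U] by simp
  finally show ?thesis .
qed

abbreviation "E u v C \<equiv> E_obj phi \<gamma> Xh u v C"

lemma E_expr:
  "E u v C = (\<Sum>i\<in>UNIV. \<Sum>j\<in>UNIV. psi ((u$i + v$j - C$i$j) / \<gamma>))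
             - ereal (\<Sum>i\<in>UNIV. \<Sum>j\<in>UNIV. ((u$i + v$j - C$i$j) / \<gamma>) * Xh$i$j)"
  unfolding E_obj_def mat_sum_def inner_mat by (simp add: oplus_def divide_inverse mult.commute)

lemma E_ident:
  "(\<Sum>i\<in>UNIV. \<Sum>j\<in>UNIV. F C $i$j * ((u$i + v$j - C$i$j) / \<gamma>) - pr (F C $i$j))
    - (\<Sum>i\<in>UNIV. \<Sum>j\<in>UNIV. ((u$i + v$j - C$i$j) / \<gamma>) * Xh$i$j) = Rv C"
proof -
  have t: "F C $i$j * ((u$i + v$j - C$i$j) / \<gamma>) - pr (F C $i$j) - ((u$i + v$j - C$i$j) / \<gamma>) * Xh$i$j
      = - pr (F C $i$j) + (1/\<gamma>) * ((u$i + v$j) * (F C $i$j - Xh$i$j)) + (1/\<gamma>) * (C$i$j * (Xh$i$j - F C $i$j))" for i j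
    using gam by (simp add: field_simps)
  have "(\<Sum>i\<in>UNIV. \<Sum>j\<in>UNIV. F C $i$j * ((u$i + v$j - C$i$j) / \<gamma>) - pr (F C $i$j))
    - (\<Sum>i\<in>UNIV. \<Sum>j\<in>UNIV. ((u$i + v$j - C$i$j) / \<gamma>) * Xh$i$j)
    = (\<Sum>i\<in>UNIV. \<Sum>j\<in>UNIV. F C $i$j * ((u$i + v$j - C$i$j) / \<gamma>) - pr (F C $i$j) - ((u$i + v$j - C$i$j) / \<gamma>) * Xh$i$j)"
    by (simp add: sum_subtractf)
  also have "\<dots> = - (\<Sum>i\<in>UNIV. \<Sum>j\<in>UNIV. pr (F C $i$j))
     + (1/\<gamma>) * (\<Sum>i\<in>UNIV. \<Sum>j\<in>UNIV. (u$i + v$j) * (F C $i$j - Xh$i$j))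
     + (1/\<gamma>) * (\<Sum>i\<in>UNIV. \<Sum>j\<in>UNIV. C$i$j * (Xh$i$j - F C $i$j))"
    unfolding t by (simp add: sum.distrib sum_distrib_left sum_negf sum_subtractf)
  also have "\<dots> = Rv C" unfolding Rv_def using marg[OF F_U Xh_U, of "\<lambda>i. u$i" "\<lambda>j. v$j"] by simp
  finally show ?thesis .
qed

lemma E_lower: "ereal (Rv C) \<le> E u v C"
proof -
  let ?z = "\<lambda>i j. (u$i + v$j - C$i$j) / \<gamma>"
  have "(\<Sum>i\<in>UNIV. \<Sum>j\<in>UNIV. ereal (F C $i$j * ?z i j - pr (F C $i$j)))
      \<le> (\<Sum>i\<in>UNIV. \<Sum>j\<in>UNIV. psi (?z i j))"
    by (intro sum_mono FY'[OF F_dom])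
  then have "ereal (\<Sum>i\<in>UNIV. \<Sum>j\<in>UNIV. F C $i$j * ?z i j - pr (F C $i$j))
      \<le> (\<Sum>i\<in>UNIV. \<Sum>j\<in>UNIV. psi (?z i j))" by simp
  then have "ereal (\<Sum>i\<in>UNIV. \<Sum>j\<in>UNIV. F C $i$j * ?z i j - pr (F C $i$j))
             - ereal (\<Sum>i\<in>UNIV. \<Sum>j\<in>UNIV. ?z i j * Xh$i$j) \<le> E u v C"
    unfolding E_expr by (rule ereal_minus_mono) simp
  then show ?thesis using E_ident[of C u v] by simp
qed

lemma psr_fun: "(\<lambda>y. real_of_ereal (psi y)) = psr" by (rule ext) (simp add: psr_def)

lemma E_dual: assumes "dual_pair phi \<gamma> \<mu> \<nu> C u v" shows "E u v C = ereal (Rv C)"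
proof -
  let ?z = "\<lambda>i j. (u$i + v$j - C$i$j) / \<gamma>"
  have "psi (?z i j) = ereal (F C $i$j * ?z i j - pr (F C $i$j))" for i j
  proof -
    have "?z i j \<in> interior (edom psi)" "(psr has_real_derivative F C $i$j) (at (?z i j))"
      using assms unfolding dual_pair_def Let_def psr_fun by auto
    then show ?thesis using conj_rev F_I0 by blast
  qed
  then have "(\<Sum>i\<in>UNIV. \<Sum>j\<in>UNIV. psi (?z i j)) = ereal (\<Sum>i\<in>UNIV. \<Sum>j\<in>UNIV. F C $i$j * ?z i j - pr (F C $i$j))"
    by simp
  then show ?thesis unfolding E_expr using E_ident[of C u v] by simp
qed

lemma dual_ex: "\<exists>u v. dual_pair phi \<gamma> \<mu> \<nu> C u v"
proof -
  obtain a b where ab: "\<And>i j. dphi (F C $i$j) = (a i + b j - C$i$j) / \<gamma>" using KKT[of C] by blast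
  have "dual_pair phi \<gamma> \<mu> \<nu> C (\<chi> i. a i) (\<chi> j. b j)"
    unfolding dual_pair_def Let_def psr_fun
  proof (intro allI)
    fix i j
    have "(a i + b j - C$i$j) / \<gamma> = dphi (F C $i$j)" using ab by simp
    then show "((\<chi> i. a i)$i + (\<chi> j. b j)$j - C$i$j) / \<gamma> \<in> interior (edom psi) \<and>
        (psr has_real_derivative F C $i$j) (at (((\<chi> i. a i)$i + (\<chi> j. b j)$j - C$i$j) / \<gamma>))"
      using conj_deriv[OF F_I0] by simp
  qed
  then show ?thesis by blast
qed

lemma P1_iff: "solves_P1 phi dphi \<gamma> \<mu> \<nu> Cs Xh C \<longleftrightarrow> C \<in> Cs \<and> (\<forall>C'\<in>Cs. Rv C \<le> Rv C')"
  unfolding solves_P1_def breg_eq by simp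

lemma main:
  shows "((\<exists>C. solves_P1 phi dphi \<gamma> \<mu> \<nu> Cs Xh C) \<longleftrightarrow> (\<exists>u v C. solves_P2 phi \<gamma> Cs Xh u v C))
       \<and> ((\<exists>C. solves_P1 phi dphi \<gamma> \<mu> \<nu> Cs Xh C) \<and> (\<exists>u v C. solves_P2 phi \<gamma> Cs Xh u v C) \<longrightarrow>
          (\<forall>C\<in>Cs. \<forall>u v. dual_pair phi \<gamma> \<mu> \<nu> C u v \<longrightarrow>
              (solves_P1 phi dphi \<gamma> \<mu> \<nu> Cs Xh C \<longleftrightarrow> solves_P2 phi \<gamma> Cs Xh u v C)))"
proof -
  have A: "solves_P2 phi \<gamma> Cs Xh u v C" if "solves_P1 phi dphi \<gamma> \<mu> \<nu> Cs Xh C" "dual_pair phi \<gamma> \<mu> \<nu> C u v" for u v C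
  proof -
    have CC: "C \<in> Cs" and le: "\<And>C'. C' \<in> Cs \<Longrightarrow> Rv C \<le> Rv C'" using that(1) P1_iff by auto
    have "E u v C \<le> E u' v' C'" if "C' \<in> Cs" for C' u' v'
    proof -
      have "E u v C = ereal (Rv C)" by (rule E_dual[OF \<open>dual_pair phi \<gamma> \<mu> \<nu> C u v\<close>])
      also have "\<dots> \<le> ereal (Rv C')" using le[OF that] by simp
      also have "\<dots> \<le> E u' v' C'" by (rule E_lower)
      finally show ?thesis .
    qed
    then show ?thesis unfolding solves_P2_def using CC by blast
  qed
  have B: "solves_P1 phi dphi \<gamma> \<mu> \<nu> Cs Xh C" if "solves_P2 phi \<gamma> Cs Xh u v C" for u v C
  proof -
    have CC: "C \<in> Cs" and le: "\<And>C' u' v'. C' \<in> Cs \<Longrightarrow> E u v C \<le> E u' v' C'"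
      using that unfolding solves_P2_def by auto
    have "Rv C \<le> Rv C'" if "C' \<in> Cs" for C'
    proof -
      obtain u' v' where d: "dual_pair phi \<gamma> \<mu> \<nu> C' u' v'" using dual_ex by blast
      have "ereal (Rv C) \<le> E u v C" by (rule E_lower)
      also have "\<dots> \<le> E u' v' C'" by (rule le[OF that])
      also have "\<dots> = ereal (Rv C')" by (rule E_dual[OF d])
      finally show ?thesis by simp
    qed
    then show ?thesis using P1_iff CC by blast
  qed
  have "(\<exists>C. solves_P1 phi dphi \<gamma> \<mu> \<nu> Cs Xh C) \<longleftrightarrow> (\<exists>u v C. solves_P2 phi \<gamma> Cs Xh u v C)"
  proof
    assume "\<exists>C. solves_P1 phi dphi \<gamma> \<mu> \<nu> Cs Xh C"
    then obtain C where c: "solves_P1 phi dphi \<gamma> \<mu> \<nu> Cs Xh C" by blast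
    obtain u v where "dual_pair phi \<gamma> \<mu> \<nu> C u v" using dual_ex by blast
    then show "\<exists>u v C. solves_P2 phi \<gamma> Cs Xh u v C" using A[OF c] by blast
  next
    assume "\<exists>u v C. solves_P2 phi \<gamma> Cs Xh u v C"
    then show "\<exists>C. solves_P1 phi dphi \<gamma> \<mu> \<nu> Cs Xh C" using B by blast
  qed
  moreover have "\<forall>C\<in>Cs. \<forall>u v. dual_pair phi \<gamma> \<mu> \<nu> C u v \<longrightarrow>
              (solves_P1 phi dphi \<gamma> \<mu> \<nu> Cs Xh C \<longleftrightarrow> solves_P2 phi \<gamma> Cs Xh u v C)"
    using A B by blast
  ultimately show ?thesis by blast
qed

end

theorem proposition6:
  fixes \<mu> \<nu> :: "real^'n"
    and \<gamma> :: real
    and phi :: "real \<Rightarrow> ereal" and dphi :: "real \<Rightarrow> real"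
    and \<C> :: "(real^'n^'n) set"
    and Xh :: "real^'n^'n"
  assumes "prob_vec \<mu>" and "prob_vec \<nu>" and "\<gamma> > 0"
    and "bregman_assumption phi dphi" and "dphi0_neg_inf dphi"
    and "\<C> \<noteq> {}" and "closed \<C>" and "convex \<C>"
    and "Xh \<in> T_phi dphi \<mu> \<nu>"
  shows "((\<exists>C. solves_P1 phi dphi \<gamma> \<mu> \<nu> \<C> Xh C) \<longleftrightarrow> (\<exists>u v C. solves_P2 phi \<gamma> \<C> Xh u v C))
       \<and> ((\<exists>C. solves_P1 phi dphi \<gamma> \<mu> \<nu> \<C> Xh C) \<and> (\<exists>u v C. solves_P2 phi \<gamma> \<C> Xh u v C) \<longrightarrow>
          (\<forall>C\<in>\<C>. \<forall>u v. dual_pair phi \<gamma> \<mu> \<nu> C u v \<longrightarrow>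
              (solves_P1 phi dphi \<gamma> \<mu> \<nu> \<C> Xh C \<longleftrightarrow> solves_P2 phi \<gamma> \<C> Xh u v C)))"
proof -
  interpret P: P6 \<mu> \<nu> \<gamma> phi dphi Xh
    by unfold_locales (use assms in auto)
  show ?thesis by (rule P.main)
qed


end
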